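(* Let $Y_1,\dots,Y_{n_{obs}}$ ($n_{obs}\ge 2$) be i.i.d. $N(\mu,\sigma^2)$. Let $\bar Y_{obs}=\frac1{n_{obs}}\sum_i Y_i$ and $CSS=\sum_{i=1}^{n_{obs}}(Y_i-\bar Y_{obs})^2$. Fix a real number $\nu_{prior}$ and set $\nu_{PD}=\nu_{prior}+n_{obs}-1>0$. Let $U_{PD}\sim\chi^2_{\nu_{PD}}$ and $Z_{PD}\sim N(0,1/n_{obs})$ be independent of each other and of the data. Define the posterior-draw estimators $\hat\sigma^2_{obs,PD}=CSS/U_{PD}$, $\hat\sigma_{obs,PD}=\sqrt{\hat\sigma^2_{obs,PD}}$ and $\hat\mu_{obs,PD}=\bar Y_{obs}+\hat\sigma_{obs,PD}Z_{PD}$. Then: (i) if $n_{obs}+\nu_{prior}>3$, $E(\hat\mu_{obs,PD})=\mu$, $\operatorname{Var}(\hat\mu_{obs,PD})=\sigma^2\frac{2n_{obs}+\nu_{prior}-4}{n_{obs}(n_{obs}+\nu_{prior}-3)}$, and $E(\hat\sigma^2_{obs,PD})-\sigma^2=\sigma^2\frac{2-\nu_{prior}}{n_{obs}+\nu_{prior}-3}$; (ii) if $n_{obs}+\nu_{prior}>5$, $\operatorname{Var}(\hat\sigma^2_{obs,PD})=\sigma^4\frac{2(n_{obs}-1)(2n_{obs}+\nu_{prior}-4)}{(n_{obs}+\nu_{prior}-5)(n_{obs}+\nu_{prior}-3)^2}$.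
   Context: This posterior-draw construction corresponds to Bayesian posterior draws under a uniform prior on $\mu$ and the (possibly improper) prior $f(\sigma^2)\propto\sigma^{-\nu_{prior}-2}$. *)

theory Defs
  imports "HOL-Probability.Probability"
begin

definition chi_squared_density :: "real \<Rightarrow> real \<Rightarrow> real" where
  "chi_squared_density k x =
     (if 0 < x then x powr (k / 2 - 1) * exp (- x / 2) / (2 powr (k / 2) * Gamma (k / 2)) else 0)"

definition sample_mean :: "nat \<Rightarrow> (nat \<Rightarrow> 'a \<Rightarrow> real) \<Rightarrow> 'a \<Rightarrow> real" where
  "sample_mean n Y \<omega> = (\<Sum>i<n. Y i \<omega>) / real n"

definition CSS :: "nat \<Rightarrow> (nat \<Rightarrow> 'a \<Rightarrow> real) \<Rightarrow> 'a \<Rightarrow> real" where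
  "CSS n Y \<omega> = (\<Sum>i<n. (Y i \<omega> - sample_mean n Y \<omega>)\<^sup>2)"

definition sigma2_PD :: "nat \<Rightarrow> (nat \<Rightarrow> 'a \<Rightarrow> real) \<Rightarrow> ('a \<Rightarrow> real) \<Rightarrow> 'a \<Rightarrow> real" where
  "sigma2_PD n Y U \<omega> = CSS n Y \<omega> / U \<omega>"

definition mu_PD :: "nat \<Rightarrow> (nat \<Rightarrow> 'a \<Rightarrow> real) \<Rightarrow> ('a \<Rightarrow> real) \<Rightarrow> ('a \<Rightarrow> real) \<Rightarrow> 'a \<Rightarrow> real" where
  "mu_PD n Y U Z \<omega> = sample_mean n Y \<omega> + sqrt (sigma2_PD n Y U \<omega>) * Z \<omega>"

end

theory Submission
  imports Defs
begin

lemma Gamma_scaled: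
  fixes a :: real assumes a: "a > 0"
  shows "has_bochner_integral lborel (\<lambda>x. indicator {0<..} x * x powr (a - 1) * exp (- x / 2)) (2 powr a * Gamma a)"
proof -
  have G: "has_bochner_integral lborel (\<lambda>t. indicator {0..} t * t powr (a - 1) / exp t) (Gamma a)"
    by (rule has_bochner_integral_nn_integral)
       (use a Gamma_conv_nn_integral_real[OF a] in \<open>auto simp: less_imp_le\<close>)
  have "has_bochner_integral lborel (\<lambda>x. (\<lambda>t. indicator {0..} t * t powr (a - 1) / exp t) (0 + (1/2) * x)) (Gamma a /\<^sub>R \<bar>1/2\<bar>)"
    using lborel_has_bochner_integral_real_affine_iff[of "1/2::real" "\<lambda>t. indicator {0..} t * t powr (a - 1) / exp t" "Gamma a" 0] G
    by simp
  then have H: "has_bochner_integral lborel (\<lambda>x. indicator {0..} (x/2) * (x/2) powr (a - 1) / exp (x/2)) (2 * Gamma a)"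
    by simp
  have "has_bochner_integral lborel (\<lambda>x. 2 powr (a - 1) * (indicator {0..} (x/2) * (x/2) powr (a - 1) / exp (x/2))) (2 powr (a - 1) * (2 * Gamma a))"
    by (rule has_bochner_integral_mult_right[OF H])
  moreover have "2 powr (a - 1) * (2 * Gamma a) = 2 powr a * Gamma a"
    by (simp add: powr_diff)
  moreover have "(\<lambda>x. 2 powr (a - 1) * (indicator {0..} (x/2) * (x/2) powr (a - 1) / exp (x/2)))
     = (\<lambda>x. indicator {0<..} x * x powr (a - 1) * exp (- x / 2))"
  proof
    fix x :: real
    show "2 powr (a - 1) * (indicator {0..} (x/2) * (x/2) powr (a - 1) / exp (x/2)) = indicator {0<..} x * x powr (a - 1) * exp (- x / 2)"
    proof (cases "x > 0")
      case True
      then show ?thesis by (simp add: powr_divide exp_minus field_simps)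
    next
      case False
      then show ?thesis by (cases "x = 0") (auto simp: indicator_def)
    qed
  qed
  ultimately show ?thesis by simp
qed

lemma chi_moment:
  fixes k p :: real assumes k: "k > 0" and kp: "k/2 + p > 0"
  shows "has_bochner_integral lborel (\<lambda>x. chi_squared_density k x * x powr p) (2 powr p * Gamma (k/2+p) / Gamma (k/2))"
proof -
  have "has_bochner_integral lborel (\<lambda>x. (indicator {0<..} x * x powr (k/2+p - 1) * exp (- x / 2)) / (2 powr (k / 2) * Gamma (k / 2)))
         ((2 powr (k/2+p) * Gamma (k/2+p)) / (2 powr (k / 2) * Gamma (k / 2)))"
    by (rule has_bochner_integral_divide_zero[OF Gamma_scaled[OF kp]])
  moreover have "(2 powr (k/2+p) * Gamma (k/2+p)) / (2 powr (k / 2) * Gamma (k / 2)) = 2 powr p * Gamma (k/2+p) / Gamma (k/2)"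
    by (simp add: powr_add)
  moreover have "(\<lambda>x. (indicator {0<..} x * x powr (k/2+p - 1) * exp (- x / 2)) / (2 powr (k / 2) * Gamma (k / 2)))
     = (\<lambda>x. chi_squared_density k x * x powr p)"
    by (auto simp: chi_squared_density_def fun_eq_iff indicator_def powr_add[symmetric] field_simps)
  ultimately show ?thesis by simp
qed


lemma (in prob_space) indep_prod_pow:
  fixes W :: "'i \<Rightarrow> 'a \<Rightarrow> real"
  assumes ind: "indep_vars (\<lambda>_. borel) W J" and T: "finite T" and g: "g ` T \<subseteq> J"
    and int: "\<And>s. s \<in> g ` T \<Longrightarrow> integrable M (\<lambda>\<omega>. W s \<omega> ^ card {t\<in>T. g t = s})"
  shows "integrable M (\<lambda>\<omega>. \<Prod>t\<in>T. W (g t) \<omega>)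
    \<and> (\<integral>\<omega>. (\<Prod>t\<in>T. W (g t) \<omega>) \<partial>M) = (\<Prod>s\<in>g ` T. \<integral>\<omega>. W s \<omega> ^ card {t\<in>T. g t = s} \<partial>M)"
proof -
  have eq: "(\<Prod>t\<in>T. W (g t) \<omega>) = (\<Prod>s\<in>g ` T. W s \<omega> ^ card {t\<in>T. g t = s})" for \<omega>
  proof -
    have "(\<Prod>t\<in>T. W (g t) \<omega>) = (\<Prod>s\<in>g ` T. \<Prod>t\<in>{x\<in>T. g x = s}. W (g t) \<omega>)"
      by (rule prod.image_gen[OF T])
    also have "\<dots> = (\<Prod>s\<in>g ` T. W s \<omega> ^ card {t\<in>T. g t = s})"
      by (intro prod.cong refl) simp
    finally show ?thesis .
  qed
  have ind2: "indep_vars (\<lambda>_. borel) (\<lambda>s \<omega>. W s \<omega> ^ card {t\<in>T. g t = s}) (g ` T)"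
    by (rule indep_vars_compose2[OF indep_vars_subset[OF ind g]]) measurable
  have fin: "finite (g ` T)" using T by simp
  show ?thesis
    unfolding eq
    using indep_vars_lebesgue_integral[OF fin ind2 int] indep_vars_integrable[OF fin ind2 int] by blast
qed

lemma sum4: "sum f {0,1,2,3::nat} = f 0 + f 1 + f 2 + (f 3 :: nat)"
  by (simp add: add.assoc)
lemma card4: "card {t\<in>{0,1,2,3::nat}. P t} = of_bool (P 0) + of_bool (P 1) + of_bool (P 2) + of_bool (P 3)"
proof -
  have "card {t\<in>{0,1,2,3::nat}. P t} = (\<Sum>t\<in>{0,1,2,3::nat}. if P t then 1 else 0)"
    by (subst card_eq_sum, subst sum.inter_filter) auto
  also have "\<dots> = of_bool (P 0) + of_bool (P 1) + of_bool (P 2) + of_bool (P 3)"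
    by (subst sum4) simp
  finally show ?thesis .
qed

lemma (in prob_space) block3:
  fixes V :: "'i \<Rightarrow> 'a \<Rightarrow> real" and F :: "('i \<Rightarrow> real) \<Rightarrow> real" and g h :: "real \<Rightarrow> real"
  assumes ind: "indep_vars (\<lambda>_. borel) V (A \<union> {a, b})" and ab: "a \<notin> A" "b \<notin> A" "a \<noteq> b"
    and F: "F \<in> borel_measurable (PiM A (\<lambda>_. borel))" and g: "g \<in> borel_measurable borel" and h: "h \<in> borel_measurable borel"
    and iF: "integrable M (\<lambda>\<omega>. F (restrict (\<lambda>j. V j \<omega>) A))"
    and ig: "integrable M (\<lambda>\<omega>. g (V a \<omega>))" and ih: "integrable M (\<lambda>\<omega>. h (V b \<omega>))"
  shows "integrable M (\<lambda>\<omega>. F (restrict (\<lambda>j. V j \<omega>) A) * g (V a \<omega>) * h (V b \<omega>))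
    \<and> (\<integral>\<omega>. F (restrict (\<lambda>j. V j \<omega>) A) * g (V a \<omega>) * h (V b \<omega>) \<partial>M)
       = (\<integral>\<omega>. F (restrict (\<lambda>j. V j \<omega>) A) \<partial>M) * (\<integral>\<omega>. g (V a \<omega>) \<partial>M) * (\<integral>\<omega>. h (V b \<omega>) \<partial>M)"
proof -
  define K :: "nat \<Rightarrow> 'i set" where "K k = (if k = 0 then A else if k = 1 then {a} else {b})" for k
  define G :: "nat \<Rightarrow> ('i \<Rightarrow> real) \<Rightarrow> real" where
    "G k = (if k = 0 then F else if k = 1 then (\<lambda>f. g (f a)) else (\<lambda>f. h (f b)))" for k
  have i1: "indep_vars (\<lambda>k. PiM (K k) (\<lambda>_. borel)) (\<lambda>k \<omega>. restrict (\<lambda>i. V i \<omega>) (K k)) {0,1,2}"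
    by (rule indep_vars_restrict[OF ind]) (use ab in \<open>auto simp: K_def disjoint_family_on_def\<close>)
  have i2: "indep_vars (\<lambda>_. borel) (\<lambda>k \<omega>. G k (restrict (\<lambda>i. V i \<omega>) (K k))) {0,1,2}"
  proof (rule indep_vars_compose2[OF i1])
    fix k :: nat assume "k \<in> {0,1,2}"
    then show "G k \<in> borel_measurable (PiM (K k) (\<lambda>_. borel))"
      using F g h by (auto simp: K_def G_def)
  qed
  have eqs: "(\<lambda>\<omega>. G 0 (restrict (\<lambda>i. V i \<omega>) (K 0))) = (\<lambda>\<omega>. F (restrict (\<lambda>j. V j \<omega>) A))"
    "(\<lambda>\<omega>. G 1 (restrict (\<lambda>i. V i \<omega>) (K 1))) = (\<lambda>\<omega>. g (V a \<omega>))"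
    "(\<lambda>\<omega>. G 2 (restrict (\<lambda>i. V i \<omega>) (K 2))) = (\<lambda>\<omega>. h (V b \<omega>))"
    by (auto simp: G_def K_def)
  have int: "integrable M (\<lambda>\<omega>. G k (restrict (\<lambda>i. V i \<omega>) (K k)))" if "k \<in> {0,1,2}" for k
    using that eqs iF ig ih by auto
  have P: "(\<Prod>k\<in>{0,1,2::nat}. G k (restrict (\<lambda>i. V i \<omega>) (K k))) = F (restrict (\<lambda>j. V j \<omega>) A) * g (V a \<omega>) * h (V b \<omega>)" for \<omega>
    by (simp add: G_def K_def)
  have P2: "(\<Prod>k\<in>{0,1,2::nat}. \<integral>\<omega>. G k (restrict (\<lambda>i. V i \<omega>) (K k)) \<partial>M) = (\<integral>\<omega>. F (restrict (\<lambda>j. V j \<omega>) A) \<partial>M) * (\<integral>\<omega>. g (V a \<omega>) \<partial>M) * (\<integral>\<omega>. h (V b \<omega>) \<partial>M)"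
    by (simp add: G_def K_def)
  have fin: "finite {0,1,2::nat}" by simp
  note I1 = indep_vars_integrable[OF fin i2 int] and E1 = indep_vars_lebesgue_integral[OF fin i2 int]
  from I1 have 1: "integrable M (\<lambda>\<omega>. F (restrict (\<lambda>j. V j \<omega>) A) * g (V a \<omega>) * h (V b \<omega>))"
    by (simp only: P)
  from E1 have 2: "(\<integral>\<omega>. F (restrict (\<lambda>j. V j \<omega>) A) * g (V a \<omega>) * h (V b \<omega>) \<partial>M)
       = (\<integral>\<omega>. F (restrict (\<lambda>j. V j \<omega>) A) \<partial>M) * (\<integral>\<omega>. g (V a \<omega>) \<partial>M) * (\<integral>\<omega>. h (V b \<omega>) \<partial>M)"
    by (simp only: P P2)
  show ?thesis using 1 2 by (rule conjI)
qed


locale PD = prob_space M for M :: "'a measure" +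
  fixes n :: nat and \<mu> \<sigma> \<nu>p :: real and Y :: "nat \<Rightarrow> 'a \<Rightarrow> real" and U Z :: "'a \<Rightarrow> real"
  assumes n2: "n \<ge> 2" and sp: "\<sigma> > 0" and nu: "\<nu>p + real n - 1 > 0"
  and DY: "\<And>i. i < n \<Longrightarrow> distributed M lborel (Y i) (\<lambda>x. ennreal (normal_density \<mu> \<sigma> x))"
  and DU: "distributed M lborel U (\<lambda>x. ennreal (chi_squared_density (\<nu>p + real n - 1) x))"
  and DZ: "distributed M lborel Z (\<lambda>x. ennreal (normal_density 0 (1 / sqrt (real n)) x))"
  and IND: "indep_vars (\<lambda>_. borel)
           (\<lambda>j. case j of Inl i \<Rightarrow> Y i | Inr b \<Rightarrow> (if b then Z else U))
           (Inl ` {..<n} \<union> Inr ` UNIV)"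
begin

definition "V = (\<lambda>j. case j of Inl i \<Rightarrow> Y i | Inr b \<Rightarrow> (if b then Z else U))"
definition "W j \<omega> = V j \<omega> - \<mu>"
definition "X i \<omega> = Y i \<omega> - \<mu>"
definition "\<delta> a b = (if a = b then 1 else (0::real))"

lemma W_Inl[simp]: "W (Inl i) = X i"
  by (auto simp: W_def X_def V_def fun_eq_iff)

lemma indV: "indep_vars (\<lambda>_. borel) V (Inl ` {..<n} \<union> Inr ` UNIV)"
  using IND unfolding V_def .

lemma indW: "indep_vars (\<lambda>_. borel) W (Inl ` {..<n})"
proof -
  have "indep_vars (\<lambda>_. borel) (\<lambda>j \<omega>. (\<lambda>x. x - \<mu>) (V j \<omega>)) (Inl ` {..<n})"
    by (rule indep_vars_compose2[OF indep_vars_subset[OF indV]]) auto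
  then show ?thesis unfolding W_def .
qed

lemma intX: "i < n \<Longrightarrow> integrable M (\<lambda>\<omega>. X i \<omega> ^ m)"
  using distributed_integrable[OF DY, of i "\<lambda>x. (x - \<mu>)^m"] integrable_normal_moment[OF sp]
  by (simp add: X_def)

lemma momX: "i < n \<Longrightarrow> (\<integral>\<omega>. X i \<omega> ^ m \<partial>M) = (\<integral>x. normal_density \<mu> \<sigma> x * (x - \<mu>) ^ m \<partial>lborel)"
  using distributed_integral[OF DY, of i "\<lambda>x. (x - \<mu>)^m"]
  by (simp add: X_def)

lemma mom1: "i < n \<Longrightarrow> (\<integral>\<omega>. X i \<omega> \<partial>M) = 0"
  using momX[of i 1] integral_normal_moment_odd[OF sp, where k=0 and \<mu>=\<mu>] by simp

lemma mom2: "i < n \<Longrightarrow> (\<integral>\<omega>. X i \<omega> ^ 2 \<partial>M) = \<sigma>\<^sup>2"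
  using momX[of i 2] integral_normal_moment_even[OF sp, where k=1 and \<mu>=\<mu>] by simp

lemma mom3: "i < n \<Longrightarrow> (\<integral>\<omega>. X i \<omega> ^ 3 \<partial>M) = 0"
  using momX[of i 3] integral_normal_moment_odd[OF sp, where k=1 and \<mu>=\<mu>] by (simp add: numeral_eq_Suc)

lemma mom4: "i < n \<Longrightarrow> (\<integral>\<omega>. X i \<omega> ^ 4 \<partial>M) = 3 * \<sigma> ^ 4"
proof -
  have "fact (2 * 2) / ((2 / \<sigma>\<^sup>2) ^ 2 * fact 2) = 3 * \<sigma> ^ 4"
    using sp by (simp add: fact_numeral power_divide field_simps power2_eq_square power4_eq_xxxx)
  then show "i < n \<Longrightarrow> ?thesis"
    using momX[of i 4] integral_normal_moment_even[OF sp, where k=2 and \<mu>=\<mu>] by simp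
qed

end

lemma card2: "card {t\<in>{0,1::nat}. P t} = of_bool (P 0) + of_bool (P 1)"
proof -
  have "card {t\<in>{0,1::nat}. P t} = (\<Sum>t\<in>{0,1::nat}. if P t then 1 else 0)"
    by (subst card_eq_sum, subst sum.inter_filter) auto
  also have "\<dots> = of_bool (P 0) + of_bool (P 1)"
    by simp
  finally show ?thesis .
qed

context PD begin

definition "EXm a m = (\<integral>\<omega>. X a \<omega> ^ m \<partial>M)"

lemma EXm0: "EXm a 0 = 1" by (simp add: EXm_def prob_space)
lemma EXm1: "a < n \<Longrightarrow> EXm a (Suc 0) = 0" by (simp add: EXm_def mom1)
lemma EXm2: "a < n \<Longrightarrow> EXm a (Suc (Suc 0)) = \<sigma>\<^sup>2" using mom2 by (simp add: EXm_def numeral_eq_Suc)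
lemma EXm3: "a < n \<Longrightarrow> EXm a (Suc (Suc (Suc 0))) = 0" using mom3 by (simp add: EXm_def numeral_eq_Suc)
lemma EXm4: "a < n \<Longrightarrow> EXm a (Suc (Suc (Suc (Suc 0)))) = 3 * \<sigma>^4" using mom4 by (simp add: EXm_def numeral_eq_Suc)

lemma E4_raw:
  assumes "i < n" "j < n" "k < n" "l < n"
  shows "integrable M (\<lambda>\<omega>. X i \<omega> * X j \<omega> * X k \<omega> * X l \<omega>)
    \<and> (\<integral>\<omega>. X i \<omega> * X j \<omega> * X k \<omega> * X l \<omega> \<partial>M)
      = (\<Prod>a\<in>{i,j,k,l}. EXm a (of_bool (i = a) + of_bool (j = a) + of_bool (k = a) + of_bool (l = a)))"
proof -
  define g where "g t = (Inl ([i,j,k,l] ! t) :: nat + bool)" for t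
  have gT: "g ` {0,1,2,3} = Inl ` {i,j,k,l}" by (auto simp: g_def)
  have sub: "g ` {0,1,2,3} \<subseteq> Inl ` {..<n}" using assms unfolding gT by auto
  have cnt: "card {t\<in>{0,1,2,3}. g t = Inl a} = of_bool (i = a) + of_bool (j = a) + of_bool (k = a) + of_bool (l = a)" for a
    by (subst card4) (auto simp: g_def)
  have int: "integrable M (\<lambda>\<omega>. W s \<omega> ^ card {t\<in>{0,1,2,3}. g t = s})" if "s \<in> g ` {0,1,2,3}" for s
    using that assms unfolding gT by (auto intro!: intX)
  note R = indep_prod_pow[OF indW _ sub int]
  have P: "(\<Prod>t\<in>{0,1,2,3::nat}. W (g t) \<omega>) = X i \<omega> * X j \<omega> * X k \<omega> * X l \<omega>" for \<omega>
    by (simp add: g_def mult.assoc)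
  have P2: "(\<Prod>s\<in>g ` {0,1,2,3}. \<integral>\<omega>. W s \<omega> ^ card {t\<in>{0,1,2,3}. g t = s} \<partial>M)
     = (\<Prod>a\<in>{i,j,k,l}. \<integral>\<omega>. X a \<omega> ^ (of_bool (i = a) + of_bool (j = a) + of_bool (k = a) + of_bool (l = a)) \<partial>M)"
  proof -
    have "(\<Prod>s\<in>Inl ` {i,j,k,l}. \<integral>\<omega>. W s \<omega> ^ card {t\<in>{0,1,2,3}. g t = s} \<partial>M)
       = (\<Prod>a\<in>{i,j,k,l}. \<integral>\<omega>. W (Inl a) \<omega> ^ card {t\<in>{0,1,2,3}. g t = Inl a} \<partial>M)"
      by (rule prod.reindex[unfolded o_def]) (simp add: inj_on_def)
    then show ?thesis unfolding gT by (simp only: W_Inl cnt)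
  qed
  show ?thesis using R unfolding P P2 EXm_def by simp
qed

lemma sq4: "(s::real)\<^sup>2 * s\<^sup>2 = s^4" by algebra

lemma E4:
  assumes "i < n" "j < n" "k < n" "l < n"
  shows "integrable M (\<lambda>\<omega>. X i \<omega> * X j \<omega> * X k \<omega> * X l \<omega>)"
    "(\<integral>\<omega>. X i \<omega> * X j \<omega> * X k \<omega> * X l \<omega> \<partial>M) = \<sigma>^4 * (\<delta> i j * \<delta> k l + \<delta> i k * \<delta> j l + \<delta> i l * \<delta> j k)"
  using E4_raw[OF assms] apply blast
  using E4_raw[OF assms] assms
  by (cases "i = j"; cases "i = k"; cases "i = l"; cases "j = k"; cases "j = l"; cases "k = l")
     (simp_all add: \<delta>_def EXm1 EXm2 EXm3 EXm4 prod.insert_if sq4)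

end

lemma integral_sum2:
  fixes f :: "'i \<Rightarrow> 'j \<Rightarrow> 'a \<Rightarrow> real"
  assumes "\<And>i j. i \<in> A \<Longrightarrow> j \<in> B \<Longrightarrow> integrable M (f i j)"
  shows "integrable M (\<lambda>\<omega>. \<Sum>i\<in>A. \<Sum>j\<in>B. f i j \<omega>)"
    "(\<integral>\<omega>. (\<Sum>i\<in>A. \<Sum>j\<in>B. f i j \<omega>) \<partial>M) = (\<Sum>i\<in>A. \<Sum>j\<in>B. \<integral>\<omega>. f i j \<omega> \<partial>M)"
  using assms by (auto intro!: integrable_sum simp: integral_sum)

lemma integral_sum3:
  fixes f :: "'i \<Rightarrow> 'j \<Rightarrow> 'k \<Rightarrow> 'a \<Rightarrow> real"
  assumes "\<And>i j k. i \<in> A \<Longrightarrow> j \<in> B \<Longrightarrow> k \<in> C \<Longrightarrow> integrable M (f i j k)"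
  shows "integrable M (\<lambda>\<omega>. \<Sum>i\<in>A. \<Sum>j\<in>B. \<Sum>k\<in>C. f i j k \<omega>)"
    "(\<integral>\<omega>. (\<Sum>i\<in>A. \<Sum>j\<in>B. \<Sum>k\<in>C. f i j k \<omega>) \<partial>M) = (\<Sum>i\<in>A. \<Sum>j\<in>B. \<Sum>k\<in>C. \<integral>\<omega>. f i j k \<omega> \<partial>M)"
  using assms by (auto intro!: integrable_sum simp: integral_sum)

lemma integral_sum4:
  fixes f :: "'i \<Rightarrow> 'j \<Rightarrow> 'k \<Rightarrow> 'l \<Rightarrow> 'a \<Rightarrow> real"
  assumes "\<And>i j k l. i \<in> A \<Longrightarrow> j \<in> B \<Longrightarrow> k \<in> C \<Longrightarrow> l \<in> D \<Longrightarrow> integrable M (f i j k l)"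
  shows "integrable M (\<lambda>\<omega>. \<Sum>i\<in>A. \<Sum>j\<in>B. \<Sum>k\<in>C. \<Sum>l\<in>D. f i j k l \<omega>)"
    "(\<integral>\<omega>. (\<Sum>i\<in>A. \<Sum>j\<in>B. \<Sum>k\<in>C. \<Sum>l\<in>D. f i j k l \<omega>) \<partial>M) = (\<Sum>i\<in>A. \<Sum>j\<in>B. \<Sum>k\<in>C. \<Sum>l\<in>D. \<integral>\<omega>. f i j k l \<omega> \<partial>M)"
  using assms by (auto intro!: integrable_sum simp: integral_sum)

context PD begin

lemma E2:
  assumes "i < n" "j < n"
  shows "integrable M (\<lambda>\<omega>. X i \<omega> * X j \<omega>)" "(\<integral>\<omega>. X i \<omega> * X j \<omega> \<partial>M) = \<sigma>\<^sup>2 * \<delta> i j"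
proof -
  define g where "g t = (Inl ([i,j] ! t) :: nat + bool)" for t
  have gT: "g ` {0,1} = Inl ` {i,j}" by (auto simp: g_def)
  have sub: "g ` {0,1} \<subseteq> Inl ` {..<n}" using assms unfolding gT by auto
  have cnt: "card {t\<in>{0,1}. g t = Inl a} = of_bool (i = a) + of_bool (j = a)" for a
    by (subst card2) (auto simp: g_def)
  have int: "integrable M (\<lambda>\<omega>. W s \<omega> ^ card {t\<in>{0,1}. g t = s})" if "s \<in> g ` {0,1}" for s
    using that assms unfolding gT by (auto intro!: intX)
  note R = indep_prod_pow[OF indW _ sub int]
  have P: "(\<Prod>t\<in>{0,1::nat}. W (g t) \<omega>) = X i \<omega> * X j \<omega>" for \<omega>
    by (simp add: g_def)
  have P2: "(\<Prod>s\<in>g ` {0,1}. \<integral>\<omega>. W s \<omega> ^ card {t\<in>{0,1}. g t = s} \<partial>M)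
     = (\<Prod>a\<in>{i,j}. EXm a (of_bool (i = a) + of_bool (j = a)))"
  proof -
    have "(\<Prod>s\<in>Inl ` {i,j}. \<integral>\<omega>. W s \<omega> ^ card {t\<in>{0,1}. g t = s} \<partial>M)
       = (\<Prod>a\<in>{i,j}. \<integral>\<omega>. W (Inl a) \<omega> ^ card {t\<in>{0,1}. g t = Inl a} \<partial>M)"
      by (rule prod.reindex[unfolded o_def]) (simp add: inj_on_def)
    then show ?thesis unfolding gT EXm_def by (simp only: W_Inl cnt)
  qed
  note R2 = R[unfolded P P2]
  show "integrable M (\<lambda>\<omega>. X i \<omega> * X j \<omega>)" using R2 by blast
  show "(\<integral>\<omega>. X i \<omega> * X j \<omega> \<partial>M) = \<sigma>\<^sup>2 * \<delta> i j"
    using R2 assms by (cases "i = j") (simp_all add: \<delta>_def EXm1 EXm2)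
qed

definition "P \<omega> = (\<Sum>i<n. X i \<omega>)"
definition "Q \<omega> = (\<Sum>i<n. (X i \<omega>)\<^sup>2)"

lemma mean_eq: "sample_mean n Y \<omega> = \<mu> + P \<omega> / real n"
  using n2 by (simp add: sample_mean_def P_def X_def sum_subtractf field_simps)

lemma CSS_eq: "CSS n Y \<omega> = Q \<omega> - (P \<omega>)\<^sup>2 / real n"
proof -
  have "CSS n Y \<omega> = (\<Sum>i<n. (X i \<omega> - P \<omega> / real n)\<^sup>2)"
    unfolding CSS_def mean_eq by (simp add: X_def algebra_simps)
  also have "\<dots> = (\<Sum>i<n. (X i \<omega>)\<^sup>2 - 2 * (P \<omega> / real n) * X i \<omega> + (P \<omega> / real n)\<^sup>2)"
    by (intro sum.cong refl) (simp add: power2_eq_square field_simps)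
  also have "\<dots> = Q \<omega> - 2 * (P \<omega> / real n) * P \<omega> + real n * (P \<omega> / real n)\<^sup>2"
    by (simp add: sum.distrib sum_subtractf sum_distrib_left Q_def P_def)
  also have "\<dots> = Q \<omega> - (P \<omega>)\<^sup>2 / real n"
    using n2 by (simp add: field_simps power2_eq_square)
  finally show ?thesis .
qed

lemma sum_delta1 [simp]: "a < n \<Longrightarrow> (\<Sum>b<n. \<delta> a b * f b) = f a"
  unfolding \<delta>_def by (subst sum.cong[OF refl, of _ _ "\<lambda>b. if a = b then f b else 0"]) auto
lemma sum_delta2 [simp]: "a < n \<Longrightarrow> (\<Sum>b<n. \<delta> b a * f b) = f a"
  unfolding \<delta>_def by (subst sum.cong[OF refl, of _ _ "\<lambda>b. if a = b then f b else 0"]) auto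
lemma sum_delta3 [simp]: "a < n \<Longrightarrow> (\<Sum>b<n. f b * \<delta> a b) = f a"
  unfolding \<delta>_def by (subst sum.cong[OF refl, of _ _ "\<lambda>b. if a = b then f b else 0"]) auto
lemma sum_delta4 [simp]: "a < n \<Longrightarrow> (\<Sum>b<n. f b * \<delta> b a) = f a"
  unfolding \<delta>_def by (subst sum.cong[OF refl, of _ _ "\<lambda>b. if a = b then f b else 0"]) auto
lemma sum_delta5 [simp]: "a < n \<Longrightarrow> (\<Sum>b<n. \<delta> a b) = 1"
  by (simp add: \<delta>_def)
lemma sum_delta6 [simp]: "a < n \<Longrightarrow> (\<Sum>b<n. \<delta> b a) = 1"
  by (simp add: \<delta>_def)
lemma delta_refl [simp]: "\<delta> a a = 1" by (simp add: \<delta>_def)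
lemma delta_sq [simp]: "\<delta> a b * \<delta> a b = \<delta> a b" by (simp add: \<delta>_def)

lemma EP2: "integrable M (\<lambda>\<omega>. (P \<omega>)\<^sup>2)" "(\<integral>\<omega>. (P \<omega>)\<^sup>2 \<partial>M) = real n * \<sigma>\<^sup>2"
proof -
  have eq: "(P \<omega>)\<^sup>2 = (\<Sum>i<n. \<Sum>j<n. X i \<omega> * X j \<omega>)" for \<omega>
    by (simp add: P_def power2_eq_square sum_product)
  show "integrable M (\<lambda>\<omega>. (P \<omega>)\<^sup>2)" unfolding eq by (rule integral_sum2) (auto intro: E2)
  show "(\<integral>\<omega>. (P \<omega>)\<^sup>2 \<partial>M) = real n * \<sigma>\<^sup>2" unfolding eq
    by (subst integral_sum2) (auto intro: E2 simp: E2 sum_distrib_left[symmetric])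
qed

lemma EQ: "integrable M Q" "(\<integral>\<omega>. Q \<omega> \<partial>M) = real n * \<sigma>\<^sup>2"
proof -
  have eq: "Q = (\<lambda>\<omega>. \<Sum>i<n. X i \<omega> ^ 2)" by (simp add: Q_def fun_eq_iff)
  show "integrable M Q" unfolding eq by (auto intro!: integrable_sum intX)
  show "(\<integral>\<omega>. Q \<omega> \<partial>M) = real n * \<sigma>\<^sup>2" unfolding eq
    by (subst Bochner_Integration.integral_sum) (auto intro: intX simp: mom2)
qed

lemma EQ2: "integrable M (\<lambda>\<omega>. (Q \<omega>)\<^sup>2)" "(\<integral>\<omega>. (Q \<omega>)\<^sup>2 \<partial>M) = \<sigma>^4 * (real n ^ 2 + 2 * real n)"
proof -
  have eq: "(Q \<omega>)\<^sup>2 = (\<Sum>i<n. \<Sum>k<n. X i \<omega> * X i \<omega> * X k \<omega> * X k \<omega>)" for \<omega>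
    by (simp only: Q_def power2_eq_square sum_product) (simp add: mult.assoc)
  show "integrable M (\<lambda>\<omega>. (Q \<omega>)\<^sup>2)" unfolding eq by (rule integral_sum2) (auto intro: E4)
  show "(\<integral>\<omega>. (Q \<omega>)\<^sup>2 \<partial>M) = \<sigma>^4 * (real n ^ 2 + 2 * real n)" unfolding eq
    apply (subst integral_sum2(2))
     apply (simp add: E4)
    apply (simp add: E4 sum_distrib_left[symmetric] sum.distrib)
    apply (simp add: algebra_simps power2_eq_square)
    done
qed

lemma EQP2: "integrable M (\<lambda>\<omega>. Q \<omega> * (P \<omega>)\<^sup>2)" "(\<integral>\<omega>. Q \<omega> * (P \<omega>)\<^sup>2 \<partial>M) = \<sigma>^4 * (real n ^ 2 + 2 * real n)"
proof -
  have eq: "Q \<omega> * (P \<omega>)\<^sup>2 = (\<Sum>i<n. \<Sum>j<n. \<Sum>k<n. X i \<omega> * X i \<omega> * X j \<omega> * X k \<omega>)" for \<omega>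
  proof -
    have "Q \<omega> * (P \<omega>)\<^sup>2 = (\<Sum>i<n. X i \<omega> * X i \<omega>) * ((\<Sum>j<n. X j \<omega>) * (\<Sum>k<n. X k \<omega>))"
      by (simp only: Q_def P_def power2_eq_square)
    also have "\<dots> = (\<Sum>i<n. \<Sum>j<n. (X i \<omega> * X i \<omega>) * (\<Sum>k<n. X j \<omega> * X k \<omega>))"
      by (simp only: sum_product)
    also have "\<dots> = (\<Sum>i<n. \<Sum>j<n. \<Sum>k<n. X i \<omega> * X i \<omega> * (X j \<omega> * X k \<omega>))"
      by (simp only: sum_distrib_left)
    finally show ?thesis by (simp add: mult.assoc)
  qed
  show "integrable M (\<lambda>\<omega>. Q \<omega> * (P \<omega>)\<^sup>2)" unfolding eq by (rule integral_sum3) (auto intro: E4)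
  show "(\<integral>\<omega>. Q \<omega> * (P \<omega>)\<^sup>2 \<partial>M) = \<sigma>^4 * (real n ^ 2 + 2 * real n)" unfolding eq
    apply (subst integral_sum3(2))
     apply (simp add: E4)
    apply (simp add: E4 sum_distrib_left[symmetric] sum.distrib)
    apply (simp add: algebra_simps power2_eq_square)
    done
qed

lemma EP4: "integrable M (\<lambda>\<omega>. (P \<omega>) ^ 4)" "(\<integral>\<omega>. (P \<omega>) ^ 4 \<partial>M) = 3 * \<sigma>^4 * real n ^ 2"
proof -
  have p4: "(x::real) ^ 4 = (x * x) * (x * x)" for x by algebra
  have eq: "(P \<omega>) ^ 4 = (\<Sum>i<n. \<Sum>k<n. \<Sum>j<n. \<Sum>l<n. X i \<omega> * X j \<omega> * X k \<omega> * X l \<omega>)" for \<omega>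
    by (simp only: P_def p4 sum_product) (simp add: mult.assoc)
  show "integrable M (\<lambda>\<omega>. (P \<omega>) ^ 4)" unfolding eq by (rule integral_sum4) (auto intro: E4)
  show "(\<integral>\<omega>. (P \<omega>) ^ 4 \<partial>M) = 3 * \<sigma>^4 * real n ^ 2" unfolding eq
    apply (subst integral_sum4(2))
     apply (simp add: E4)
    apply (simp add: E4 sum_distrib_left[symmetric] sum.distrib)
    apply (simp add: algebra_simps power2_eq_square)
    done
qed

end

lemma (in prob_space) var_expand:
  fixes f :: "'a \<Rightarrow> real"
  assumes "integrable M f" "integrable M (\<lambda>x. (f x)\<^sup>2)"
  shows "(\<integral>x. (f x - c)\<^sup>2 \<partial>M) = (\<integral>x. (f x)\<^sup>2 \<partial>M) - 2 * c * (\<integral>x. f x \<partial>M) + c\<^sup>2"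
proof -
  have "(\<lambda>x. (f x - c)\<^sup>2) = (\<lambda>x. ((f x)\<^sup>2 - 2 * c * f x) + c\<^sup>2)"
    by (simp add: fun_eq_iff power2_diff algebra_simps)
  then have "(\<integral>x. (f x - c)\<^sup>2 \<partial>M) = (\<integral>x. ((f x)\<^sup>2 - 2 * c * f x) + c\<^sup>2 \<partial>M)" by simp
  also have "\<dots> = (\<integral>x. (f x)\<^sup>2 - 2 * c * f x \<partial>M) + c\<^sup>2"
    using assms by (subst Bochner_Integration.integral_add) (auto simp: prob_space)
  also have "(\<integral>x. (f x)\<^sup>2 - 2 * c * f x \<partial>M) = (\<integral>x. (f x)\<^sup>2 \<partial>M) - 2 * c * (\<integral>x. f x \<partial>M)"
    using assms by (subst Bochner_Integration.integral_diff) auto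
  finally show ?thesis .
qed

context PD begin

lemma measY[measurable]: "i < n \<Longrightarrow> Y i \<in> borel_measurable M"
  using distributed_measurable[OF DY] by simp
lemma measU[measurable]: "U \<in> borel_measurable M"
  using distributed_measurable[OF DU] by simp
lemma measZ[measurable]: "Z \<in> borel_measurable M"
  using distributed_measurable[OF DZ] by simp

lemma CSS_nonneg: "CSS n Y \<omega> \<ge> 0"
  by (simp add: CSS_def sum_nonneg)

lemma measX[measurable]: "i < n \<Longrightarrow> X i \<in> borel_measurable M"
  unfolding X_def by measurable

lemma measP[measurable]: "P \<in> borel_measurable M"
  unfolding P_def by measurable
lemma measQ[measurable]: "Q \<in> borel_measurable M"
  unfolding Q_def by measurable

lemma CSS_fun: "CSS n Y = (\<lambda>\<omega>. Q \<omega> - (P \<omega>)\<^sup>2 / real n)"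
  using CSS_eq by auto
lemma mean_fun: "sample_mean n Y = (\<lambda>\<omega>. \<mu> + P \<omega> / real n)"
  using mean_eq by auto

lemma measCSS[measurable]: "CSS n Y \<in> borel_measurable M"
  unfolding CSS_fun by measurable
lemma measMean[measurable]: "sample_mean n Y \<in> borel_measurable M"
  unfolding mean_fun by measurable

lemma EP: "integrable M P" "(\<integral>\<omega>. P \<omega> \<partial>M) = 0"
proof -
  have eq: "P = (\<lambda>\<omega>. \<Sum>i<n. X i \<omega> ^ 1)" by (simp add: P_def fun_eq_iff)
  have i1: "i < n \<Longrightarrow> integrable M (X i)" for i using intX[where i=i and m=1] by simp
  show "integrable M P" unfolding P_def by (intro Bochner_Integration.integrable_sum) (use i1 in auto)
  show "(\<integral>\<omega>. P \<omega> \<partial>M) = 0" unfolding eq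
    by (subst Bochner_Integration.integral_sum) (auto intro: i1 simp: mom1)
qed

lemma ECSS: "integrable M (CSS n Y)" "(\<integral>\<omega>. CSS n Y \<omega> \<partial>M) = (real n - 1) * \<sigma>\<^sup>2"
proof -
  show "integrable M (CSS n Y)" unfolding CSS_fun using EQ EP2 by auto
  have "(\<integral>\<omega>. CSS n Y \<omega> \<partial>M) = (\<integral>\<omega>. Q \<omega> \<partial>M) - (\<integral>\<omega>. (P \<omega>)\<^sup>2 \<partial>M) / real n"
    unfolding CSS_fun using EQ EP2 by (subst Bochner_Integration.integral_diff) auto
  also have "\<dots> = (real n - 1) * \<sigma>\<^sup>2" using n2 by (simp add: EQ EP2 field_simps)
  finally show "(\<integral>\<omega>. CSS n Y \<omega> \<partial>M) = (real n - 1) * \<sigma>\<^sup>2" .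
qed

lemma ECSS2: "integrable M (\<lambda>\<omega>. (CSS n Y \<omega>)\<^sup>2)" "(\<integral>\<omega>. (CSS n Y \<omega>)\<^sup>2 \<partial>M) = (real n ^ 2 - 1) * \<sigma>^4"
proof -
  have eq: "(\<lambda>\<omega>. (CSS n Y \<omega>)\<^sup>2) = (\<lambda>\<omega>. ((Q \<omega>)\<^sup>2 - (2 / real n) * (Q \<omega> * (P \<omega>)\<^sup>2)) + (1 / real n ^ 2) * P \<omega> ^ 4)"
    unfolding CSS_fun using n2 by (simp add: fun_eq_iff power2_diff field_simps power2_eq_square power4_eq_xxxx)
  show "integrable M (\<lambda>\<omega>. (CSS n Y \<omega>)\<^sup>2)" unfolding eq using EQ2 EQP2 EP4 by auto
  have "(\<integral>\<omega>. (CSS n Y \<omega>)\<^sup>2 \<partial>M) = ((\<integral>\<omega>. (Q \<omega>)\<^sup>2 \<partial>M) - (2 / real n) * (\<integral>\<omega>. Q \<omega> * (P \<omega>)\<^sup>2 \<partial>M)) + (1 / real n ^ 2) * (\<integral>\<omega>. P \<omega> ^ 4 \<partial>M)"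
    unfolding eq using EQ2 EQP2 EP4
    by (simp add: Bochner_Integration.integral_add Bochner_Integration.integral_diff)
  also have "\<dots> = (real n ^ 2 - 1) * \<sigma>^4" using n2 unfolding EQ2(2) EQP2(2) EP4(2) by (simp add: field_simps power2_eq_square)
  finally show "(\<integral>\<omega>. (CSS n Y \<omega>)\<^sup>2 \<partial>M) = (real n ^ 2 - 1) * \<sigma>^4" .
qed

lemma EMean: "integrable M (sample_mean n Y)" "(\<integral>\<omega>. sample_mean n Y \<omega> \<partial>M) = \<mu>"
  "integrable M (\<lambda>\<omega>. (sample_mean n Y \<omega>)\<^sup>2)" "(\<integral>\<omega>. (sample_mean n Y \<omega>)\<^sup>2 \<partial>M) = \<mu>\<^sup>2 + \<sigma>\<^sup>2 / real n"
proof -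
  show "integrable M (sample_mean n Y)" unfolding mean_fun using EP by auto
  show "(\<integral>\<omega>. sample_mean n Y \<omega> \<partial>M) = \<mu>" unfolding mean_fun using EP by (simp add: prob_space)
  have eq: "(\<lambda>\<omega>. (sample_mean n Y \<omega>)\<^sup>2) = (\<lambda>\<omega>. (\<mu>\<^sup>2 + (2 * \<mu> / real n) * P \<omega>) + (1 / real n ^ 2) * (P \<omega>)\<^sup>2)"
    unfolding mean_fun using n2 by (simp add: fun_eq_iff power2_eq_square field_simps)
  show "integrable M (\<lambda>\<omega>. (sample_mean n Y \<omega>)\<^sup>2)" unfolding eq using EP EP2 by auto
  have "(\<integral>\<omega>. (sample_mean n Y \<omega>)\<^sup>2 \<partial>M) = (\<mu>\<^sup>2 + (2 * \<mu> / real n) * (\<integral>\<omega>. P \<omega> \<partial>M)) + (1 / real n ^ 2) * (\<integral>\<omega>. (P \<omega>)\<^sup>2 \<partial>M)"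
    unfolding eq using EP EP2
    by (simp add: Bochner_Integration.integral_add prob_space)
  also have "\<dots> = \<mu>\<^sup>2 + \<sigma>\<^sup>2 / real n" using n2 unfolding EP(2) EP2(2) by (simp add: field_simps power2_eq_square)
  finally show "(\<integral>\<omega>. (sample_mean n Y \<omega>)\<^sup>2 \<partial>M) = \<mu>\<^sup>2 + \<sigma>\<^sup>2 / real n" .
qed

end

lemma chi_nonneg: "k > 0 \<Longrightarrow> 0 \<le> chi_squared_density k x"
  by (simp add: chi_squared_density_def)

lemma sqrt_le_1p: "(c::real) \<ge> 0 \<Longrightarrow> sqrt c \<le> 1 + c"
  by (rule real_le_lsqrt) (auto simp: power2_eq_square algebra_simps intro: add_nonneg_nonneg)

lemma amgm_sqrt: "(c::real) \<ge> 0 \<Longrightarrow> \<bar>a * sqrt c\<bar> \<le> a\<^sup>2 + c"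
proof -
  assume c: "c \<ge> 0"
  have "0 \<le> (\<bar>a\<bar> - sqrt c)\<^sup>2" by simp
  also have "\<dots> = a\<^sup>2 - 2 * (\<bar>a\<bar> * sqrt c) + c"
    using c by (simp add: power2_diff)
  finally have 1: "\<bar>a\<bar> * sqrt c \<le> (a\<^sup>2 + c) / 2" by simp
  have 2: "\<bar>a * sqrt c\<bar> = \<bar>a\<bar> * sqrt c" using c by (simp add: abs_mult)
  have 3: "0 \<le> a\<^sup>2 + c" using c by simp
  have 4: "(a\<^sup>2 + c) / 2 \<le> a\<^sup>2 + c" using 3 by simp
  show ?thesis unfolding 2 using order_trans[OF 1 4] .
qed

context PD begin

abbreviation "kk \<equiv> \<nu>p + real n - 1"

lemma Umom:
  fixes g :: "real \<Rightarrow> real"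
  assumes gm: "g \<in> borel_measurable borel" and gp: "\<And>x. x > 0 \<Longrightarrow> g x = x powr p" and pk: "kk/2 + p > 0"
  shows "integrable M (\<lambda>\<omega>. g (U \<omega>))" "(\<integral>\<omega>. g (U \<omega>) \<partial>M) = 2 powr p * Gamma (kk/2+p) / Gamma (kk/2)"
proof -
  have eqf: "(\<lambda>x. chi_squared_density kk x * g x) = (\<lambda>x. chi_squared_density kk x * x powr p)"
    using gp by (auto simp: fun_eq_iff chi_squared_density_def)
  note HB = chi_moment[OF nu pk]
  have nn: "\<And>x. 0 \<le> chi_squared_density kk x" using nu by (simp add: chi_nonneg)
  show "integrable M (\<lambda>\<omega>. g (U \<omega>))"
    using distributed_integrable[OF DU, of g] nn gm HB eqf by (auto dest: integrable.intros)
  show "(\<integral>\<omega>. g (U \<omega>) \<partial>M) = 2 powr p * Gamma (kk/2+p) / Gamma (kk/2)"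
    using distributed_integral[OF DU, of g] nn gm HB eqf has_bochner_integral_integral_eq[OF HB] by auto
qed

lemma Gamma_step: "(x::real) > 0 \<Longrightarrow> Gamma (x + 1) = x * Gamma x"
  by (rule Gamma_plus1) (auto dest: nonpos_Ints_nonpos)

lemma UR:
  assumes h3: "real n + \<nu>p > 3"
  shows "integrable M (\<lambda>\<omega>. 1 / sqrt (U \<omega>))"
    "integrable M (\<lambda>\<omega>. (1 / sqrt (U \<omega>))\<^sup>2)" "(\<integral>\<omega>. (1 / sqrt (U \<omega>))\<^sup>2 \<partial>M) = 1 / (kk - 2)"
    "integrable M (\<lambda>\<omega>. 1 / U \<omega>)" "(\<integral>\<omega>. 1 / U \<omega> \<partial>M) = 1 / (kk - 2)"
proof -
  have p0: "\<And>x::real. x > 0 \<Longrightarrow> 1 / sqrt x = x powr (-(1/2))"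
    by (simp add: powr_minus_divide powr_half_sqrt less_imp_le)
  show "integrable M (\<lambda>\<omega>. 1 / sqrt (U \<omega>))"
    by (rule Umom(1)[OF _ p0]) (use h3 in simp_all)
  define a where "a = kk/2 - 1"
  have a: "a > 0" using h3 unfolding a_def by simp
  have G: "Gamma (kk/2) = a * Gamma a" using Gamma_step[OF a] unfolding a_def by simp
  have v: "2 powr (-1) * Gamma (kk/2 + -1) / Gamma (kk/2) = 1 / (kk - 2)"
  proof -
    have ga: "Gamma a \<noteq> 0" using Gamma_real_pos[OF a] by simp
    have e1: "kk/2 + -1 = a" by (simp add: a_def)
    have "2 powr (-1) * Gamma (kk/2 + -1) / Gamma (kk/2) = (1/2) * Gamma a / (a * Gamma a)"
      by (simp only: e1 G) (simp add: powr_minus_divide)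
    also have "\<dots> = 1 / (2 * a)" using a ga by (simp add: field_simps)
    also have "\<dots> = 1 / (kk - 2)"
    proof -
      have "2 * a = kk - 2" unfolding a_def by (simp add: field_simps)
      then show ?thesis by simp
    qed
    finally show ?thesis .
  qed
  have p1: "\<And>x::real. x > 0 \<Longrightarrow> (1 / sqrt x)\<^sup>2 = x powr (-1)"
    by (simp add: powr_minus_divide power_divide)
  have p2: "\<And>x::real. x > 0 \<Longrightarrow> 1 / x = x powr (-1)"
    by (simp add: powr_minus_divide)
  show "integrable M (\<lambda>\<omega>. (1 / sqrt (U \<omega>))\<^sup>2)"
    by (rule Umom(1)[OF _ p1]) (use h3 in simp_all)
  have "(\<integral>\<omega>. (1 / sqrt (U \<omega>))\<^sup>2 \<partial>M) = 2 powr (-1) * Gamma (kk/2 + -1) / Gamma (kk/2)"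
    by (rule Umom(2)[OF _ p1]) (use h3 in simp_all)
  then show "(\<integral>\<omega>. (1 / sqrt (U \<omega>))\<^sup>2 \<partial>M) = 1 / (kk - 2)" by (simp only: v)
  show "integrable M (\<lambda>\<omega>. 1 / U \<omega>)"
    by (rule Umom(1)[OF _ p2]) (use h3 in simp_all)
  have "(\<integral>\<omega>. 1 / U \<omega> \<partial>M) = 2 powr (-1) * Gamma (kk/2 + -1) / Gamma (kk/2)"
    by (rule Umom(2)[OF _ p2]) (use h3 in simp_all)
  then show "(\<integral>\<omega>. 1 / U \<omega> \<partial>M) = 1 / (kk - 2)" by (simp only: v)
qed

lemma UR2:
  assumes h5: "real n + \<nu>p > 5"
  shows "integrable M (\<lambda>\<omega>. (1 / U \<omega>)\<^sup>2)" "(\<integral>\<omega>. (1 / U \<omega>)\<^sup>2 \<partial>M) = 1 / ((kk - 2) * (kk - 4))"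
proof -
  define b where "b = kk/2 - 2"
  have b: "b > 0" using h5 unfolding b_def by simp
  have G: "Gamma (kk/2) = (b + 1) * b * Gamma b"
  proof -
    have e2: "kk/2 = (b + 1) + 1" by (simp add: b_def)
    show ?thesis unfolding e2 using Gamma_step[of "b + 1"] Gamma_step[OF b] b by simp
  qed
  have v: "2 powr (-2) * Gamma (kk/2 + -2) / Gamma (kk/2) = 1 / ((kk - 2) * (kk - 4))"
  proof -
    have gb: "Gamma b \<noteq> 0" using Gamma_real_pos[OF b] by simp
    have e1: "kk/2 + -2 = b" by (simp add: b_def)
    have "2 powr (-2) * Gamma (kk/2 + -2) / Gamma (kk/2) = (1/4) * Gamma b / ((b + 1) * b * Gamma b)"
      by (simp only: e1 G) (simp add: powr_minus_divide)
    also have "\<dots> = (1/4) / ((b + 1) * b)"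
      by (rule nonzero_mult_divide_mult_cancel_right[OF gb])
    also have "\<dots> = 1 / ((kk - 2) * (kk - 4))"
    proof -
      have "kk - 2 = 2 * (b + 1)" "kk - 4 = 2 * b" unfolding b_def by (simp_all add: field_simps)
      then show ?thesis by simp
    qed
    finally show ?thesis .
  qed
  have p: "\<And>x::real. x > 0 \<Longrightarrow> (1 / x)\<^sup>2 = x powr (-2)"
    by (simp add: powr_minus_divide power_divide powr_numeral)
  show "integrable M (\<lambda>\<omega>. (1 / U \<omega>)\<^sup>2)"
    by (rule Umom(1)[OF _ p]) (use h5 in simp_all)
  have "(\<integral>\<omega>. (1 / U \<omega>)\<^sup>2 \<partial>M) = 2 powr (-2) * Gamma (kk/2 + -2) / Gamma (kk/2)"
    by (rule Umom(2)[OF _ p]) (use h5 in simp_all)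
  then show "(\<integral>\<omega>. (1 / U \<omega>)\<^sup>2 \<partial>M) = 1 / ((kk - 2) * (kk - 4))" by (simp only: v)
qed

lemma ZM: "integrable M Z" "(\<integral>\<omega>. Z \<omega> \<partial>M) = 0"
  "integrable M (\<lambda>\<omega>. (Z \<omega>)\<^sup>2)" "(\<integral>\<omega>. (Z \<omega>)\<^sup>2 \<partial>M) = 1 / real n"
proof -
  have sz: "1 / sqrt (real n) > 0" using n2 by simp
  have nn: "\<And>x. 0 \<le> normal_density 0 (1 / sqrt (real n)) x" by simp
  show "integrable M Z"
    using distributed_integrable[OF DZ, of "\<lambda>x. x"] integrable_normal_moment[OF sz, where k=1 and \<mu>=0] by simp
  show "integrable M (\<lambda>\<omega>. (Z \<omega>)\<^sup>2)"
    using distributed_integrable[OF DZ, of "\<lambda>x. x\<^sup>2"] integrable_normal_moment[OF sz, where k=2 and \<mu>=0] by simp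
  show "(\<integral>\<omega>. Z \<omega> \<partial>M) = 0"
    using distributed_integral[OF DZ, of "\<lambda>x. x"] integral_normal_moment_odd[OF sz, where k=0 and \<mu>=0] by simp
  show "(\<integral>\<omega>. (Z \<omega>)\<^sup>2 \<partial>M) = 1 / real n"
    using distributed_integral[OF DZ, of "\<lambda>x. x\<^sup>2"] integral_normal_moment_even[OF sz, where k=1 and \<mu>=0] n2
    by (simp add: power_divide)
qed

end

context PD begin

definition meanf :: "(nat + bool \<Rightarrow> real) \<Rightarrow> real" where
  "meanf f = (\<Sum>i<n. f (Inl i)) / real n"
definition cssf :: "(nat + bool \<Rightarrow> real) \<Rightarrow> real" where
  "cssf f = (\<Sum>i<n. (f (Inl i) - meanf f)\<^sup>2)"

lemma comp_meas: "i < n \<Longrightarrow> (\<lambda>f. f (Inl i)) \<in> borel_measurable (PiM (Inl ` {..<n}) (\<lambda>_. (borel :: real measure)))"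
  by (rule measurable_component_singleton) auto

lemma meanf_meas[measurable]: "meanf \<in> borel_measurable (PiM (Inl ` {..<n}) (\<lambda>_. borel))"
  unfolding meanf_def
  by (intro borel_measurable_divide borel_measurable_sum comp_meas measurable_const) auto

lemma cssf_meas[measurable]: "cssf \<in> borel_measurable (PiM (Inl ` {..<n}) (\<lambda>_. borel))"
  unfolding cssf_def
  by (intro borel_measurable_sum borel_measurable_power borel_measurable_diff comp_meas meanf_meas) auto

lemma meanf_r: "meanf (restrict (\<lambda>j. V j \<omega>) (Inl ` {..<n})) = sample_mean n Y \<omega>"
  unfolding meanf_def sample_mean_def by (auto simp: V_def intro!: sum.cong)

lemma cssf_r: "cssf (restrict (\<lambda>j. V j \<omega>) (Inl ` {..<n})) = CSS n Y \<omega>"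
  unfolding cssf_def CSS_def meanf_r by (auto simp: V_def intro!: sum.cong)

lemma blk:
  fixes F :: "(nat + bool \<Rightarrow> real) \<Rightarrow> real" and g h :: "real \<Rightarrow> real"
  assumes F: "F \<in> borel_measurable (PiM (Inl ` {..<n}) (\<lambda>_. borel))"
    and g: "g \<in> borel_measurable borel" and h: "h \<in> borel_measurable borel"
    and FG: "\<And>\<omega>. F (restrict (\<lambda>j. V j \<omega>) (Inl ` {..<n})) = G \<omega>"
    and iG: "integrable M G" and ig: "integrable M (\<lambda>\<omega>. g (U \<omega>))" and ih: "integrable M (\<lambda>\<omega>. h (Z \<omega>))"
  shows "integrable M (\<lambda>\<omega>. G \<omega> * g (U \<omega>) * h (Z \<omega>))"
    "(\<integral>\<omega>. G \<omega> * g (U \<omega>) * h (Z \<omega>) \<partial>M) = (\<integral>\<omega>. G \<omega> \<partial>M) * (\<integral>\<omega>. g (U \<omega>) \<partial>M) * (\<integral>\<omega>. h (Z \<omega>) \<partial>M)"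
proof -
  have VU: "V (Inr False) = U" "V (Inr True) = Z" by (auto simp: V_def)
  have e: "Inl ` {..<n} \<union> Inr ` UNIV = Inl ` {..<n} \<union> {Inr False, Inr True}"
    by (auto simp: UNIV_bool)
  have i: "indep_vars (\<lambda>_. borel) V (Inl ` {..<n} \<union> {Inr False, Inr True})"
    using indV unfolding e .
  have iF: "integrable M (\<lambda>\<omega>. F (restrict (\<lambda>j. V j \<omega>) (Inl ` {..<n})))"
    unfolding FG using iG by simp
  have ig': "integrable M (\<lambda>\<omega>. g (V (Inr False) \<omega>))" unfolding VU by (rule ig)
  have ih': "integrable M (\<lambda>\<omega>. h (V (Inr True) \<omega>))" unfolding VU by (rule ih)
  note R = block3[OF i _ _ _ F g h iF ig' ih', unfolded FG VU]
  show "integrable M (\<lambda>\<omega>. G \<omega> * g (U \<omega>) * h (Z \<omega>))" using R by auto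
  show "(\<integral>\<omega>. G \<omega> * g (U \<omega>) * h (Z \<omega>) \<partial>M) = (\<integral>\<omega>. G \<omega> \<partial>M) * (\<integral>\<omega>. g (U \<omega>) \<partial>M) * (\<integral>\<omega>. h (Z \<omega>) \<partial>M)"
    using R by auto
qed

lemma int_sqrtCSS: "integrable M (\<lambda>\<omega>. sqrt (CSS n Y \<omega>))"
proof (rule Bochner_Integration.integrable_bound)
  show "integrable M (\<lambda>\<omega>. 1 + CSS n Y \<omega>)" using ECSS(1) by (auto simp: prob_space)
  show "(\<lambda>\<omega>. sqrt (CSS n Y \<omega>)) \<in> borel_measurable M" by measurable
  show "AE \<omega> in M. norm (sqrt (CSS n Y \<omega>)) \<le> norm (1 + CSS n Y \<omega>)"
    using CSS_nonneg sqrt_le_1p by (auto intro!: AE_I2)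
qed

lemma int_mean_sqrtCSS: "integrable M (\<lambda>\<omega>. sample_mean n Y \<omega> * sqrt (CSS n Y \<omega>))"
proof (rule Bochner_Integration.integrable_bound)
  show "integrable M (\<lambda>\<omega>. (sample_mean n Y \<omega>)\<^sup>2 + CSS n Y \<omega>)" using ECSS(1) EMean(3) by auto
  show "(\<lambda>\<omega>. sample_mean n Y \<omega> * sqrt (CSS n Y \<omega>)) \<in> borel_measurable M" by measurable
  show "AE \<omega> in M. norm (sample_mean n Y \<omega> * sqrt (CSS n Y \<omega>)) \<le> norm ((sample_mean n Y \<omega>)\<^sup>2 + CSS n Y \<omega>)"
  proof (intro AE_I2)
    fix \<omega>
    have "\<bar>sample_mean n Y \<omega> * sqrt (CSS n Y \<omega>)\<bar> \<le> (sample_mean n Y \<omega>)\<^sup>2 + CSS n Y \<omega>"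
      by (rule amgm_sqrt[OF CSS_nonneg])
    also have "\<dots> \<le> \<bar>(sample_mean n Y \<omega>)\<^sup>2 + CSS n Y \<omega>\<bar>" by simp
    finally show "norm (sample_mean n Y \<omega> * sqrt (CSS n Y \<omega>)) \<le> norm ((sample_mean n Y \<omega>)\<^sup>2 + CSS n Y \<omega>)"
      by simp
  qed
qed

end

lemma alg1:
  fixes N D S :: real
  assumes "N \<noteq> 0" "D \<noteq> 0"
  shows "S / N + (N - 1) * S / (D * N) = S * (N - 1 + D) / (N * D)"
  using assms by (simp add: field_simps)

lemma alg2:
  fixes N d Q :: real
  assumes "d \<noteq> 0" "d - 2 \<noteq> 0"
  shows "(N^2 - 1) * Q^2 / (d * (d - 2)) - ((N - 1) * Q / d)^2 = Q^2 * (2 * (N - 1) * (N - 1 + d)) / ((d - 2) * d^2)"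
proof -
  have "(N^2 - 1) * Q^2 / (d * (d - 2)) - ((N - 1) * Q / d)^2
      = ((N^2 - 1) * Q^2 * d - (N - 1)^2 * Q^2 * (d - 2)) / ((d - 2) * d^2)"
    using assms by (simp add: field_simps power2_eq_square)
  also have "(N^2 - 1) * Q^2 * d - (N - 1)^2 * Q^2 * (d - 2) = Q^2 * (2 * (N - 1) * (N - 1 + d))"
    by (simp add: power2_eq_square algebra_simps)
  finally show ?thesis .
qed

context PD begin

lemma mu_fun: "mu_PD n Y U Z = (\<lambda>\<omega>. sample_mean n Y \<omega> + sqrt (CSS n Y \<omega>) * (1 / sqrt (U \<omega>)) * Z \<omega>)"
  by (simp add: fun_eq_iff mu_PD_def sigma2_PD_def real_sqrt_divide)

lemma mu2_fun: "(\<lambda>\<omega>. (mu_PD n Y U Z \<omega>)\<^sup>2) = (\<lambda>\<omega>. ((sample_mean n Y \<omega>)\<^sup>2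
   + 2 * ((sample_mean n Y \<omega> * sqrt (CSS n Y \<omega>)) * (1 / sqrt (U \<omega>)) * Z \<omega>))
   + CSS n Y \<omega> * (1 / sqrt (U \<omega>))\<^sup>2 * (Z \<omega>)\<^sup>2)"
proof
  fix \<omega>
  have s: "(sqrt (CSS n Y \<omega>))\<^sup>2 = CSS n Y \<omega>" using CSS_nonneg by simp
  have "(mu_PD n Y U Z \<omega>)\<^sup>2 = ((sample_mean n Y \<omega>)\<^sup>2
   + 2 * ((sample_mean n Y \<omega> * sqrt (CSS n Y \<omega>)) * (1 / sqrt (U \<omega>)) * Z \<omega>))
   + (sqrt (CSS n Y \<omega>))\<^sup>2 * (1 / sqrt (U \<omega>))\<^sup>2 * (Z \<omega>)\<^sup>2"
    unfolding mu_fun by (simp add: power2_eq_square algebra_simps)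
  then show "(mu_PD n Y U Z \<omega>)\<^sup>2 = ((sample_mean n Y \<omega>)\<^sup>2
   + 2 * ((sample_mean n Y \<omega> * sqrt (CSS n Y \<omega>)) * (1 / sqrt (U \<omega>)) * Z \<omega>))
   + CSS n Y \<omega> * (1 / sqrt (U \<omega>))\<^sup>2 * (Z \<omega>)\<^sup>2" unfolding s .
qed

lemma s2_fun: "sigma2_PD n Y U = (\<lambda>\<omega>. CSS n Y \<omega> * (1 / U \<omega>) * 1)"
  by (simp add: fun_eq_iff sigma2_PD_def)

lemma s4_fun: "(\<lambda>\<omega>. (sigma2_PD n Y U \<omega>)\<^sup>2) = (\<lambda>\<omega>. (CSS n Y \<omega>)\<^sup>2 * (1 / U \<omega>)\<^sup>2 * 1)"
  by (simp add: fun_eq_iff sigma2_PD_def power_divide)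

lemma main_i:
  assumes h3: "real n + \<nu>p > 3"
  shows "integrable M (mu_PD n Y U Z)
      \<and> integrable M (\<lambda>\<omega>. (mu_PD n Y U Z \<omega>)\<^sup>2)
      \<and> integrable M (sigma2_PD n Y U)
      \<and> (\<integral>\<omega>. mu_PD n Y U Z \<omega> \<partial>M) = \<mu>
      \<and> (\<integral>\<omega>. (mu_PD n Y U Z \<omega> - (\<integral>\<omega>'. mu_PD n Y U Z \<omega>' \<partial>M))\<^sup>2 \<partial>M)
          = \<sigma>\<^sup>2 * (2 * real n + \<nu>p - 4) / (real n * (real n + \<nu>p - 3))
      \<and> (\<integral>\<omega>. sigma2_PD n Y U \<omega> \<partial>M) - \<sigma>\<^sup>2
          = \<sigma>\<^sup>2 * (2 - \<nu>p) / (real n + \<nu>p - 3)"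
proof -
  note UR = UR[OF h3]
  have m1: "(\<lambda>u::real. 1 / sqrt u) \<in> borel_measurable borel" by measurable
  have m2: "(\<lambda>u::real. (1 / sqrt u)\<^sup>2) \<in> borel_measurable borel" by measurable
  have m3: "(\<lambda>u::real. 1 / u) \<in> borel_measurable borel" by measurable
  have mz: "(\<lambda>z::real. z) \<in> borel_measurable borel" by measurable
  have mz2: "(\<lambda>z::real. z\<^sup>2) \<in> borel_measurable borel" by measurable
  have m1c: "(\<lambda>z::real. 1) \<in> borel_measurable borel" by measurable
  have F1: "(\<lambda>f. sqrt (cssf f)) \<in> borel_measurable (PiM (Inl ` {..<n}) (\<lambda>_. borel))" by measurable
  have F2: "(\<lambda>f. meanf f * sqrt (cssf f)) \<in> borel_measurable (PiM (Inl ` {..<n}) (\<lambda>_. borel))" by measurable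
  note B1 = blk[OF F1 m1 mz _ int_sqrtCSS UR(1) ZM(1), unfolded cssf_r]
  note B2 = blk[OF F2 m1 mz _ int_mean_sqrtCSS UR(1) ZM(1), unfolded cssf_r meanf_r]
  note B3 = blk[OF cssf_meas m2 mz2 _ ECSS(1) UR(2) ZM(3), unfolded cssf_r]
  note B4 = blk[OF cssf_meas m3 m1c _ ECSS(1) UR(4), unfolded cssf_r]
  have i1: "integrable M (\<lambda>\<omega>. sqrt (CSS n Y \<omega>) * (1 / sqrt (U \<omega>)) * Z \<omega>)" using B1 by simp
  have e1: "(\<integral>\<omega>. sqrt (CSS n Y \<omega>) * (1 / sqrt (U \<omega>)) * Z \<omega> \<partial>M) = 0" using B1 ZM(2) by simp
  have i2: "integrable M (\<lambda>\<omega>. (sample_mean n Y \<omega> * sqrt (CSS n Y \<omega>)) * (1 / sqrt (U \<omega>)) * Z \<omega>)" using B2 by simp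
  have e2: "(\<integral>\<omega>. (sample_mean n Y \<omega> * sqrt (CSS n Y \<omega>)) * (1 / sqrt (U \<omega>)) * Z \<omega> \<partial>M) = 0" using B2 ZM(2) by simp
  have i3: "integrable M (\<lambda>\<omega>. CSS n Y \<omega> * (1 / sqrt (U \<omega>))\<^sup>2 * (Z \<omega>)\<^sup>2)" using B3 by simp
  have e3: "(\<integral>\<omega>. CSS n Y \<omega> * (1 / sqrt (U \<omega>))\<^sup>2 * (Z \<omega>)\<^sup>2 \<partial>M) = (real n - 1) * \<sigma>\<^sup>2 * (1 / (kk - 2)) * (1 / real n)"
    using B3(2) ECSS(2) UR(3) ZM(4) by simp
  have i4: "integrable M (\<lambda>\<omega>. CSS n Y \<omega> * (1 / U \<omega>) * 1)" using B4 by (simp add: prob_space)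
  have e4: "(\<integral>\<omega>. CSS n Y \<omega> * (1 / U \<omega>) * 1 \<partial>M) = (real n - 1) * \<sigma>\<^sup>2 * (1 / (kk - 2))"
    using B4(2) ECSS(2) UR(5) by (simp add: prob_space)
  have imu: "integrable M (mu_PD n Y U Z)" unfolding mu_fun using EMean(1) i1 by auto
  have emu: "(\<integral>\<omega>. mu_PD n Y U Z \<omega> \<partial>M) = \<mu>" unfolding mu_fun
    using EMean(1,2) i1 e1 by (simp add: Bochner_Integration.integral_add)
  have imu2: "integrable M (\<lambda>\<omega>. (mu_PD n Y U Z \<omega>)\<^sup>2)" unfolding mu2_fun
    by (intro Bochner_Integration.integrable_add Bochner_Integration.integrable_mult_right EMean(3) i2 i3)
  have emu2: "(\<integral>\<omega>. (mu_PD n Y U Z \<omega>)\<^sup>2 \<partial>M) = (\<mu>\<^sup>2 + \<sigma>\<^sup>2 / real n) + 2 * 0 + (real n - 1) * \<sigma>\<^sup>2 * (1 / (kk - 2)) * (1 / real n)"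
  proof -
    let ?a = "\<lambda>\<omega>. (sample_mean n Y \<omega>)\<^sup>2"
    let ?b = "\<lambda>\<omega>. (sample_mean n Y \<omega> * sqrt (CSS n Y \<omega>)) * (1 / sqrt (U \<omega>)) * Z \<omega>"
    let ?c = "\<lambda>\<omega>. CSS n Y \<omega> * (1 / sqrt (U \<omega>))\<^sup>2 * (Z \<omega>)\<^sup>2"
    have ib2: "integrable M (\<lambda>\<omega>. 2 * ?b \<omega>)" by (intro Bochner_Integration.integrable_mult_right i2)
    have iab: "integrable M (\<lambda>\<omega>. ?a \<omega> + 2 * ?b \<omega>)" by (intro Bochner_Integration.integrable_add EMean(3) ib2)
    have "(\<integral>\<omega>. (?a \<omega> + 2 * ?b \<omega>) + ?c \<omega> \<partial>M) = (\<integral>\<omega>. ?a \<omega> + 2 * ?b \<omega> \<partial>M) + (\<integral>\<omega>. ?c \<omega> \<partial>M)"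
      by (rule Bochner_Integration.integral_add[OF iab i3])
    also have "(\<integral>\<omega>. ?a \<omega> + 2 * ?b \<omega> \<partial>M) = (\<integral>\<omega>. ?a \<omega> \<partial>M) + (\<integral>\<omega>. 2 * ?b \<omega> \<partial>M)"
      by (rule Bochner_Integration.integral_add[OF EMean(3) ib2])
    also have "(\<integral>\<omega>. 2 * ?b \<omega> \<partial>M) = 2 * (\<integral>\<omega>. ?b \<omega> \<partial>M)"
      by (rule integral_mult_right_zero)
    finally show ?thesis unfolding mu2_fun EMean(4) e2 e3 .
  qed
  have is2: "integrable M (sigma2_PD n Y U)" unfolding s2_fun by (rule i4)
  have es2: "(\<integral>\<omega>. sigma2_PD n Y U \<omega> \<partial>M) = (real n - 1) * \<sigma>\<^sup>2 * (1 / (kk - 2))"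
    unfolding s2_fun by (rule e4)
  have d: "real n + \<nu>p - 3 > 0" using h3 by simp
  have nz: "real n > 0" using n2 by simp
  have var: "(\<integral>\<omega>. (mu_PD n Y U Z \<omega> - (\<integral>\<omega>'. mu_PD n Y U Z \<omega>' \<partial>M))\<^sup>2 \<partial>M)
          = \<sigma>\<^sup>2 * (2 * real n + \<nu>p - 4) / (real n * (real n + \<nu>p - 3))"
  proof -
    have "(\<integral>\<omega>. (mu_PD n Y U Z \<omega> - (\<integral>\<omega>'. mu_PD n Y U Z \<omega>' \<partial>M))\<^sup>2 \<partial>M)
       = (\<integral>\<omega>. (mu_PD n Y U Z \<omega>)\<^sup>2 \<partial>M) - 2 * \<mu> * \<mu> + \<mu>\<^sup>2"
      unfolding emu using var_expand[OF imu imu2, of \<mu>] emu by simp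
    also have "\<dots> = \<sigma>\<^sup>2 / real n + (real n - 1) * \<sigma>\<^sup>2 / ((real n + \<nu>p - 3) * real n)"
    proof -
      have kk2: "kk - 2 = real n + \<nu>p - 3" by simp
      show ?thesis unfolding emu2 kk2 using d nz by (simp add: field_simps power2_eq_square)
    qed
    also have "\<dots> = \<sigma>\<^sup>2 * (real n - 1 + (real n + \<nu>p - 3)) / (real n * (real n + \<nu>p - 3))"
      by (rule alg1) (use d nz in auto)
    also have "real n - 1 + (real n + \<nu>p - 3) = 2 * real n + \<nu>p - 4" by simp
    finally show ?thesis .
  qed
  have bias: "(\<integral>\<omega>. sigma2_PD n Y U \<omega> \<partial>M) - \<sigma>\<^sup>2 = \<sigma>\<^sup>2 * (2 - \<nu>p) / (real n + \<nu>p - 3)"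
  proof -
    have "(\<integral>\<omega>. sigma2_PD n Y U \<omega> \<partial>M) - \<sigma>\<^sup>2 = (real n - 1) * \<sigma>\<^sup>2 / (real n + \<nu>p - 3) - \<sigma>\<^sup>2"
    proof -
      have kk2: "kk - 2 = real n + \<nu>p - 3" by simp
      show ?thesis unfolding es2 kk2 by simp
    qed
    also have "\<dots> = \<sigma>\<^sup>2 * (2 - \<nu>p) / (real n + \<nu>p - 3)"
      using d by (simp add: field_simps)
    finally show ?thesis .
  qed
  show ?thesis using imu imu2 is2 emu var bias by blast
qed

lemma main_ii:
  assumes h5: "real n + \<nu>p > 5"
  shows "integrable M (\<lambda>\<omega>. (sigma2_PD n Y U \<omega>)\<^sup>2)
      \<and> (\<integral>\<omega>. (sigma2_PD n Y U \<omega> - (\<integral>\<omega>'. sigma2_PD n Y U \<omega>' \<partial>M))\<^sup>2 \<partial>M)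
          = \<sigma> ^ 4 * (2 * (real n - 1) * (2 * real n + \<nu>p - 4))
            / ((real n + \<nu>p - 5) * (real n + \<nu>p - 3)\<^sup>2)"
proof -
  have h3: "real n + \<nu>p > 3" using h5 by simp
  note UR2 = UR2[OF h5]
  have m4: "(\<lambda>u::real. (1 / u)\<^sup>2) \<in> borel_measurable borel" by measurable
  have m1c: "(\<lambda>z::real. 1) \<in> borel_measurable borel" by measurable
  have F5: "(\<lambda>f. (cssf f)\<^sup>2) \<in> borel_measurable (PiM (Inl ` {..<n}) (\<lambda>_. borel))" by measurable
  note B5 = blk[OF F5 m4 m1c _ ECSS2(1) UR2(1) integrable_const, unfolded cssf_r]
  have is4: "integrable M (\<lambda>\<omega>. (sigma2_PD n Y U \<omega>)\<^sup>2)" unfolding s4_fun using B5 by simp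
  have es4: "(\<integral>\<omega>. (sigma2_PD n Y U \<omega>)\<^sup>2 \<partial>M) = (real n ^ 2 - 1) * \<sigma>^4 * (1 / ((kk - 2) * (kk - 4)))"
    unfolding s4_fun using B5(2) ECSS2(2) UR2(2) by (simp add: prob_space)
  have is2: "integrable M (sigma2_PD n Y U)" using main_i[OF h3] by blast
  have "(\<integral>\<omega>. sigma2_PD n Y U \<omega> \<partial>M) - \<sigma>\<^sup>2 = \<sigma>\<^sup>2 * (2 - \<nu>p) / (real n + \<nu>p - 3)"
    using main_i[OF h3] by blast
  have d: "real n + \<nu>p - 3 > 0" "real n + \<nu>p - 5 > 0" using h5 by simp_all
  have es2: "(\<integral>\<omega>. sigma2_PD n Y U \<omega> \<partial>M) = (real n - 1) * \<sigma>\<^sup>2 / (real n + \<nu>p - 3)"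
  proof -
    have "(\<integral>\<omega>. sigma2_PD n Y U \<omega> \<partial>M) = \<sigma>\<^sup>2 + \<sigma>\<^sup>2 * (2 - \<nu>p) / (real n + \<nu>p - 3)"
      using main_i[OF h3] by (simp add: algebra_simps)
    also have "\<dots> = (real n - 1) * \<sigma>\<^sup>2 / (real n + \<nu>p - 3)"
      using d by (simp add: field_simps)
    finally show ?thesis .
  qed
  have "(\<integral>\<omega>. (sigma2_PD n Y U \<omega> - (\<integral>\<omega>'. sigma2_PD n Y U \<omega>' \<partial>M))\<^sup>2 \<partial>M)
      = (\<integral>\<omega>. (sigma2_PD n Y U \<omega>)\<^sup>2 \<partial>M) - 2 * ((real n - 1) * \<sigma>\<^sup>2 / (real n + \<nu>p - 3)) * ((real n - 1) * \<sigma>\<^sup>2 / (real n + \<nu>p - 3)) + ((real n - 1) * \<sigma>\<^sup>2 / (real n + \<nu>p - 3))\<^sup>2"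
    unfolding es2 using var_expand[OF is2 is4, of "(real n - 1) * \<sigma>\<^sup>2 / (real n + \<nu>p - 3)"] es2 by simp
  also have "\<dots> = (real n ^ 2 - 1) * \<sigma>^4 / ((real n + \<nu>p - 3) * (real n + \<nu>p - 5)) - ((real n - 1) * \<sigma>\<^sup>2 / (real n + \<nu>p - 3))\<^sup>2"
    unfolding es4 by (simp add: power2_eq_square algebra_simps)
  also have "\<dots> = \<sigma> ^ 4 * (2 * (real n - 1) * (2 * real n + \<nu>p - 4))
            / ((real n + \<nu>p - 5) * (real n + \<nu>p - 3)\<^sup>2)"
  proof -
    have A: "(real n ^ 2 - 1) * (\<sigma>\<^sup>2) ^ 2 / ((real n + \<nu>p - 3) * ((real n + \<nu>p - 3) - 2)) - ((real n - 1) * \<sigma>\<^sup>2 / (real n + \<nu>p - 3)) ^ 2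
       = (\<sigma>\<^sup>2) ^ 2 * (2 * (real n - 1) * (real n - 1 + (real n + \<nu>p - 3))) / (((real n + \<nu>p - 3) - 2) * (real n + \<nu>p - 3) ^ 2)"
      by (rule alg2) (use d in auto)
    have e1: "(real n + \<nu>p - 3) - 2 = real n + \<nu>p - 5" by simp
    have e2: "real n - 1 + (real n + \<nu>p - 3) = 2 * real n + \<nu>p - 4" by simp
    have e3: "(\<sigma>\<^sup>2) ^ 2 = \<sigma> ^ 4" by algebra
    show ?thesis using A unfolding e1 e2 e3 .
  qed
  finally show ?thesis using is4 by blast
qed

end

theorem mainTheorem1:
  fixes M :: "'a measure" and n :: nat and \<mu> \<sigma> \<nu>_prior :: real
    and Y :: "nat \<Rightarrow> 'a \<Rightarrow> real" and U Z :: "'a \<Rightarrow> real"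
  assumes "prob_space M"
    and "n \<ge> 2"
    and "\<sigma> > 0"
    and "\<nu>_prior + real n - 1 > 0"
    and "\<And>i. i < n \<Longrightarrow> distributed M lborel (Y i) (\<lambda>x. ennreal (normal_density \<mu> \<sigma> x))"
    and "distributed M lborel U (\<lambda>x. ennreal (chi_squared_density (\<nu>_prior + real n - 1) x))"
    and "distributed M lborel Z (\<lambda>x. ennreal (normal_density 0 (1 / sqrt (real n)) x))"
    and "prob_space.indep_vars M (\<lambda>_. borel)
           (\<lambda>j. case j of Inl i \<Rightarrow> Y i | Inr b \<Rightarrow> (if b then Z else U))
           (Inl ` {..<n} \<union> Inr ` UNIV)"
  shows
    "(real n + \<nu>_prior > 3 \<longrightarrow>
        integrable M (mu_PD n Y U Z)
      \<and> integrable M (\<lambda>\<omega>. (mu_PD n Y U Z \<omega>)\<^sup>2)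
      \<and> integrable M (sigma2_PD n Y U)
      \<and> (\<integral>\<omega>. mu_PD n Y U Z \<omega> \<partial>M) = \<mu>
      \<and> (\<integral>\<omega>. (mu_PD n Y U Z \<omega> - (\<integral>\<omega>'. mu_PD n Y U Z \<omega>' \<partial>M))\<^sup>2 \<partial>M)
          = \<sigma>\<^sup>2 * (2 * real n + \<nu>_prior - 4) / (real n * (real n + \<nu>_prior - 3))
      \<and> (\<integral>\<omega>. sigma2_PD n Y U \<omega> \<partial>M) - \<sigma>\<^sup>2
          = \<sigma>\<^sup>2 * (2 - \<nu>_prior) / (real n + \<nu>_prior - 3))
   \<and> (real n + \<nu>_prior > 5 \<longrightarrow>
        integrable M (\<lambda>\<omega>. (sigma2_PD n Y U \<omega>)\<^sup>2)
      \<and> (\<integral>\<omega>. (sigma2_PD n Y U \<omega> - (\<integral>\<omega>'. sigma2_PD n Y U \<omega>' \<partial>M))\<^sup>2 \<partial>M)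
          = \<sigma> ^ 4 * (2 * (real n - 1) * (2 * real n + \<nu>_prior - 4))
            / ((real n + \<nu>_prior - 5) * (real n + \<nu>_prior - 3)\<^sup>2))"
proof -
  interpret PD M n \<mu> \<sigma> \<nu>_prior Y U Z
    by (rule PD.intro[OF assms(1)], unfold_locales) (use assms in auto)
  show ?thesis using main_i main_ii by blast
qed


end
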